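(* Suppose the coin process $\mathbf X$ satisfies \[ \lim_{m\to\infty}P_{X^m}(\mathcal S_m^c(\lambda))=0\quad\text{for every }\lambda>0, \] where $\mathcal S_m(\lambda)=\{x^m:\log\frac{1}{P_{X^m}(x^m)}\ge\lambda\}$. Then for every $n$ and every target distribution $P_{Y^n}$, the interval algorithm is valid, i.e. $\lim_{m\to\infty}\Pr(\phi_{\mathrm{int}}(X^m)=y^n)=P_{Y^n}(y^n)$ for every $y^n\in\mathcal Y^n$.
   Context: Logarithms are base 2. $\mathcal X=\{1,\dots,M\}$, $\mathcal Y=\{1,\dots,N\}$ are finite sets; the coin process $\mathbf X=\{X^m\}_{m\ge1}$ on $\mathcal X$ and target process $\mathbf Y=\{Y^n\}$ on $\mathcal Y$ are arbitrary processes given by consistent families of distributions. Interval algorithm: for $s\in\mathcal X^i$ define $\mathcal I_s=[\underline\alpha_s,\overline\alpha_s)$ by $\mathcal I_\bot=[0,1)$ and $\underline\alpha_{sx}=\underline\alpha_s+(\overline\alpha_s-\underline\alpha_s)\sum_{k<x}P_{X_{i+1}|X^i}(k|s)$, $\overline\alpha_{sx}=\underline\alpha_s+(\overline\alpha_s-\underline\alpha_s)\sum_{k\le x}P_{X_{i+1}|X^i}(k|s)$ (so $|\mathcal I_s|=P_{X^i}(s)$); define $\mathcal J_t$ for $t\in\mathcal Y^j$ likewise from $P_{Y_{j+1}|Y^j}$. The algorithm stops at the first $m$ with $\mathcal I_{X^m}\subseteq\mathcal J_{y^n}$ for some $y^n\in\mathcal Y^n$ and outputs that $y^n$; $\phi_{\mathrm{int}}(x^m)$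 is the output if it has stopped after reading $x^m$, and $\bot$ otherwise. *)

theory Defs
  imports "HOL-Analysis.Analysis"
begin

definition words :: "nat \<Rightarrow> nat \<Rightarrow> nat list set" where
  "words K m = {xs. length xs = m \<and> set xs \<subseteq> {1..K}}"

text \<open>A process on {1..K}, given by a consistent family of distributions:
  P m is the distribution of the first m symbols (a pmf on words K m).\<close>
definition is_process :: "nat \<Rightarrow> (nat \<Rightarrow> nat list \<Rightarrow> real) \<Rightarrow> bool" where
  "is_process K P \<longleftrightarrow>
     (\<forall>m xs. 0 \<le> P m xs) \<and>
     (\<forall>m xs. xs \<notin> words K m \<longrightarrow> P m xs = 0) \<and>
     (\<forall>m. (\<Sum>xs\<in>words K m. P m xs) = 1) \<and>
     (\<forall>m xs. P m xs = (\<Sum>x\<in>{1..K}. P (Suc m) (xs @ [x])))"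

text \<open>Conditional probability P_{X_{i+1}|X^i}(k|s), with i = length s
  (convention: 0 if P(s) = 0, where the interval I_s is empty anyway).\<close>
definition cond_prob :: "(nat \<Rightarrow> nat list \<Rightarrow> real) \<Rightarrow> nat \<Rightarrow> nat list \<Rightarrow> real" where
  "cond_prob P k s = P (Suc (length s)) (s @ [k]) / P (length s) s"

fun ivr :: "(nat \<Rightarrow> nat list \<Rightarrow> real) \<Rightarrow> nat list \<Rightarrow> real \<times> real" where
  "ivr P [] = (0, 1)"
| "ivr P (x # rs) =
     (let s = rev rs; a = fst (ivr P rs); b = snd (ivr P rs) in
       (a + (b - a) * (\<Sum>k\<in>{1..<x}. cond_prob P k s),
        a + (b - a) * (\<Sum>k\<in>{1..x}. cond_prob P k s)))"

definition endpoints :: "(nat \<Rightarrow> nat list \<Rightarrow> real) \<Rightarrow> nat list \<Rightarrow> real \<times> real" where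
  "endpoints P s = ivr P (rev s)"

definition interval :: "(nat \<Rightarrow> nat list \<Rightarrow> real) \<Rightarrow> nat list \<Rightarrow> real set" where
  "interval P s = {r. fst (endpoints P s) \<le> r \<and> r < snd (endpoints P s)}"

definition stops_at :: "(nat \<Rightarrow> nat list \<Rightarrow> real) \<Rightarrow> nat \<Rightarrow> (nat \<Rightarrow> nat list \<Rightarrow> real)
    \<Rightarrow> nat \<Rightarrow> nat list \<Rightarrow> bool" where
  "stops_at P N Q n s \<longleftrightarrow> (\<exists>y\<in>words N n. interval P s \<subseteq> interval Q y)"

text \<open>phi_int(x^m): Some output if stopped after reading x^m, None (bottom) otherwise.\<close>
definition phi_int :: "(nat \<Rightarrow> nat list \<Rightarrow> real) \<Rightarrow> nat \<Rightarrow> (nat \<Rightarrow> nat list \<Rightarrow> real)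
    \<Rightarrow> nat \<Rightarrow> nat list \<Rightarrow> nat list option" where
  "phi_int P N Q n xs =
     (if \<exists>k\<le>length xs. stops_at P N Q n (take k xs)
      then (let k0 = (LEAST k. stops_at P N Q n (take k xs)) in
            Some (SOME y. y \<in> words N n \<and> interval P (take k0 xs) \<subseteq> interval Q y))
      else None)"

definition prob_output :: "nat \<Rightarrow> (nat \<Rightarrow> nat list \<Rightarrow> real) \<Rightarrow> nat \<Rightarrow> (nat \<Rightarrow> nat list \<Rightarrow> real)
    \<Rightarrow> nat \<Rightarrow> nat \<Rightarrow> nat list \<Rightarrow> real" where
  "prob_output M P N Q n m y =
     (\<Sum>xs\<in>words M m. if phi_int P N Q n xs = Some y then P m xs else 0)"

text \<open>P_{X^m}(S_m^c(lambda)) where S_m(lambda) = {x^m. log(1/P(x^m)) \<ge> lambda}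
  (x^m with P(x^m) = 0 have log(1/P) = \<infinity> and so belong to S_m).\<close>
definition prob_Sc :: "nat \<Rightarrow> (nat \<Rightarrow> nat list \<Rightarrow> real) \<Rightarrow> nat \<Rightarrow> real \<Rightarrow> real" where
  "prob_Sc M P m lam =
     (\<Sum>xs\<in>{xs\<in>words M m. 0 < P m xs \<and> log 2 (1 / P m xs) < lam}. P m xs)"

end

theory Submission
  imports Defs
begin


lemma sum_disj_le:
  fixes l h :: "'a \<Rightarrow> real"
  assumes fin: "finite S" and le: "\<And>i. i\<in>S \<Longrightarrow> l i \<le> h i"
    and dj: "\<And>i j. i\<in>S \<Longrightarrow> j\<in>S \<Longrightarrow> i\<noteq>j \<Longrightarrow> {l i..<h i} \<inter> {l j..<h j} = {}"
    and sub: "\<And>i. i\<in>S \<Longrightarrow> {l i..<h i} \<subseteq> T" and T: "T \<in> fmeasurable lborel"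
  shows "(\<Sum>i\<in>S. h i - l i) \<le> measure lborel T"
proof -
  have "measure lborel (\<Union>i\<in>S. {l i..<h i}) = (\<Sum>i\<in>S. measure lborel {l i..<h i})"
    by (rule measure_finite_Union) (use fin dj le in \<open>auto simp: disjoint_family_on_def emeasure_lborel_Ico\<close>)
  also have "\<dots> = (\<Sum>i\<in>S. h i - l i)" using le by (intro sum.cong) auto
  finally have e: "measure lborel (\<Union>i\<in>S. {l i..<h i}) = (\<Sum>i\<in>S. h i - l i)" .
  have "measure lborel (\<Union>i\<in>S. {l i..<h i}) \<le> measure lborel T"
    by (rule measure_mono_fmeasurable) (use sub T fin in \<open>auto intro!: sets.finite_UN\<close>)
  then show ?thesis using e by simp
qed

lemma words_finite: "finite (words K m)"
proof -
  have "words K m = {xs. set xs \<subseteq> {1..K} \<and> length xs = m}" by (auto simp: words_def)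
  then show ?thesis using finite_lists_length_eq[of "{1..K}" m] by simp
qed

lemma words0: "words K 0 = {[]}" by (auto simp: words_def)

definition lo where "lo P s = fst (endpoints P s)"
definition hi where "hi P s = snd (endpoints P s)"

lemma interval_eq: "interval P s = {lo P s..<hi P s}"
  by (auto simp: interval_def lo_def hi_def)

lemma lohi_Nil: "lo P [] = 0" "hi P [] = 1"
  by (auto simp: lo_def hi_def endpoints_def)

lemma lohi_snoc_raw:
  "lo P (s@[x]) = lo P s + (hi P s - lo P s) * (\<Sum>k\<in>{1..<x}. cond_prob P k s)"
  "hi P (s@[x]) = lo P s + (hi P s - lo P s) * (\<Sum>k\<in>{1..x}. cond_prob P k s)"
  by (simp_all add: lo_def hi_def endpoints_def Let_def)

context
  fixes K P assumes pr: "is_process K P"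
begin

lemma nn: "0 \<le> P m xs" using pr unfolding is_process_def by blast
lemma zr: "xs \<notin> words K m \<Longrightarrow> P m xs = 0" using pr unfolding is_process_def by blast
lemma s1: "(\<Sum>xs\<in>words K m. P m xs) = 1" using pr unfolding is_process_def by blast
lemma cons: "P m xs = (\<Sum>x\<in>{1..K}. P (Suc m) (xs @ [x]))" using pr unfolding is_process_def by blast

lemma snoc_zero:
  assumes "P (length s) s = 0" shows "P (Suc (length s)) (s@[k]) = 0"
proof (cases "k \<in> {1..K}")
  case True
  have "(\<Sum>x\<in>{1..K}. P (Suc (length s)) (s @ [x])) = 0" using assms cons[of "length s" s] by linarith
  then have "\<forall>x\<in>{1..K}. P (Suc (length s)) (s @ [x]) = 0"
    by (subst (asm) sum_nonneg_eq_0_iff) (auto simp: nn)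
  then show ?thesis using True by blast
next
  case False
  then have "s@[k] \<notin> words K (Suc (length s))" by (auto simp: words_def)
  then show ?thesis by (rule zr)
qed

lemma cond_mul: "P (length s) s * cond_prob P k s = P (Suc (length s)) (s@[k])"
  by (cases "P (length s) s = 0") (auto simp: cond_prob_def snoc_zero)

lemma len: "hi P s - lo P s = P (length s) s"
proof (induction s rule: rev_induct)
  case Nil
  then show ?case using s1[of 0] by (simp add: words0 lohi_Nil)
next
  case (snoc x s)
  have "hi P (s@[x]) - lo P (s@[x]) =
     (\<Sum>k\<in>{1..x}. P (length s) s * cond_prob P k s) - (\<Sum>k\<in>{1..<x}. P (length s) s * cond_prob P k s)"
    by (simp add: lohi_snoc_raw snoc sum_distrib_left)
  also have "\<dots> = (\<Sum>k\<in>{1..x}. P (Suc (length s)) (s@[k])) - (\<Sum>k\<in>{1..<x}. P (Suc (length s)) (s@[k]))"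
    by (simp add: cond_mul)
  also have "\<dots> = P (Suc (length s)) (s@[x])"
  proof (cases "x = 0")
    case True
    then have "s@[x] \<notin> words K (Suc (length s))" by (auto simp: words_def)
    then show ?thesis using True zr by simp
  next
    case False
    then have "{1..x} = insert x {1..<x}" by auto
    then show ?thesis by simp
  qed
  finally show ?case by simp
qed

lemma lo_snoc: "lo P (s@[x]) = lo P s + (\<Sum>k\<in>{1..<x}. P (Suc (length s)) (s@[k]))"
  by (simp add: lohi_snoc_raw len sum_distrib_left cond_mul)
lemma hi_snoc: "hi P (s@[x]) = lo P s + (\<Sum>k\<in>{1..x}. P (Suc (length s)) (s@[k]))"
  by (simp add: lohi_snoc_raw len sum_distrib_left cond_mul)

lemma sum_le_all: "(\<Sum>k\<in>{1..x}. P (Suc (length s)) (s@[k])) \<le> P (length s) s"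
proof -
  have "(\<Sum>k\<in>{1..x}. P (Suc (length s)) (s@[k])) = (\<Sum>k\<in>{1..x} \<inter> {1..K}. P (Suc (length s)) (s@[k]))"
  proof (rule sum.mono_neutral_right)
    show "\<forall>i\<in>{1..x} - {1..x} \<inter> {1..K}. P (Suc (length s)) (s @ [i]) = 0"
      by (auto intro!: zr simp: words_def)
  qed auto
  also have "\<dots> \<le> (\<Sum>k\<in>{1..K}. P (Suc (length s)) (s@[k]))"
    by (rule sum_mono2) (auto simp: nn)
  finally show ?thesis using cons[of "length s" s] by simp
qed

lemma nest1: "lo P s \<le> lo P (s@[x])" "hi P (s@[x]) \<le> hi P s"
proof -
  show "lo P s \<le> lo P (s@[x])" by (simp add: lo_snoc sum_nonneg nn)
  show "hi P (s@[x]) \<le> hi P s" using sum_le_all[where x=x and s=s] len[of s] by (simp add: hi_snoc)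
qed

lemma bounds: "0 \<le> lo P s" "lo P s \<le> hi P s" "hi P s \<le> 1"
proof -
  show "lo P s \<le> hi P s" using len[of s] nn[of "length s" s] by simp
  show "0 \<le> lo P s"
  proof (induction s rule: rev_induct)
    case (snoc x s) then show ?case using nest1(1)[of s x] by linarith
  qed (simp add: lohi_Nil)
  show "hi P s \<le> 1"
  proof (induction s rule: rev_induct)
    case (snoc x s) then show ?case using nest1(2)[of s x] by linarith
  qed (simp add: lohi_Nil)
qed

lemma nest: "interval P (s@t) \<subseteq> interval P s"
proof (induction t rule: rev_induct)
  case Nil then show ?case by simp
next
  case (snoc x t)
  have "interval P (s@t@[x]) \<subseteq> interval P (s@t)"
    using nest1[of "s@t" x] by (auto simp: interval_eq)
  then show ?case using snoc by (metis append_assoc order_trans)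
qed

lemma nest_take: "interval P xs \<subseteq> interval P (take k xs)"
  using nest[of "take k xs" "drop k xs"] by simp

lemma child_sep: assumes "x < x'" shows "hi P (s@[x]) \<le> lo P (s@[x'])"
proof -
  have "(\<Sum>k\<in>{1..x}. P (Suc (length s)) (s@[k])) \<le> (\<Sum>k\<in>{1..<x'}. P (Suc (length s)) (s@[k]))"
    by (rule sum_mono2) (use assms in \<open>auto simp: nn\<close>)
  then show ?thesis by (simp add: lo_snoc hi_snoc)
qed

lemma disj: "length s = length s' \<Longrightarrow> s \<noteq> s' \<Longrightarrow> interval P s \<inter> interval P s' = {}"
proof (induction s arbitrary: s' rule: rev_induct)
  case Nil then show ?case by simp
next
  case (snoc x u)
  have "s' \<noteq> []" using snoc.prems by auto
  then obtain u' x' where s': "s' = u'@[x']" by (cases s' rule: rev_exhaust) auto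
  show ?case
  proof (cases "u = u'")
    case True
    then have "x \<noteq> x'" using snoc.prems s' by simp
    then have "x < x' \<or> x' < x" by (simp add: nat_neq_iff)
    then show ?thesis
    proof
      assume "x < x'"
      then have "hi P (u@[x]) \<le> lo P (u@[x'])" by (rule child_sep)
      then show ?thesis unfolding s' True[symmetric] interval_eq by auto
    next
      assume "x' < x"
      then have "hi P (u@[x']) \<le> lo P (u@[x])" by (rule child_sep)
      then show ?thesis unfolding s' True[symmetric] interval_eq by auto
    qed
  next
    case False
    have "length u = length u'" using snoc.prems s' by simp
    then have "interval P u \<inter> interval P u' = {}" using snoc.IH False by blast
    moreover have "interval P (u@[x]) \<subseteq> interval P u" "interval P (u'@[x']) \<subseteq> interval P u'"
      using nest by blast+
    ultimately show ?thesis unfolding s' by blast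
  qed
qed

end


lemma pow_bound: "2 powr (- real (Suc k)) \<le> (1/2::real)^k"
proof -
  have "2 powr (- real (Suc k)) \<le> 2 powr (- real k)" by (intro powr_mono) auto
  also have "\<dots> = (1/2::real)^k" by (simp add: powr_minus powr_realpow power_one_over inverse_eq_divide)
  finally show ?thesis .
qed

lemma Ico_fm: "{a..<b::real} \<in> fmeasurable lborel"
  by (cases "a \<le> b") (auto simp: fmeasurable_def emeasure_lborel_Ico)

lemma log_bound: "0 < p \<Longrightarrow> \<not> log 2 (1/p) < lam \<Longrightarrow> p \<le> 2 powr (-lam)"
proof -
  assume p: "0 < p" and h: "\<not> log 2 (1/p) < lam"
  then have "2 powr lam \<le> 1/p" using le_log_iff[of 2 "1/p" lam] by simp
  then have "p * 2 powr lam \<le> 1" using p by (simp add: field_simps)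
  then have "p \<le> 1 / 2 powr lam" by (simp add: field_simps)
  then show ?thesis by (simp add: powr_minus_divide)
qed

lemma geo: "\<not> {a..<b} \<subseteq> {c..<d::real} \<Longrightarrow> {a..<b} \<inter> {c..<d} \<noteq> {} \<Longrightarrow> c \<in> {a..<b} \<or> d \<in> {a..<b}"
  by (auto simp: subset_iff)

lemma subsing_sum:
  fixes f :: "'a \<Rightarrow> real"
  assumes "\<And>a b. a \<in> X \<Longrightarrow> b \<in> X \<Longrightarrow> a = b" "\<And>x. x \<in> X \<Longrightarrow> f x \<le> d" "0 \<le> d"
  shows "sum f X \<le> d"
proof (cases "X = {}")
  case True then show ?thesis using assms by simp
next
  case False
  then obtain a where "a \<in> X" by blast
  then have "X = {a}" using assms(1) by blast
  then show ?thesis using assms(2) by simp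
qed

lemma phi_some:
  assumes "phi_int P N Q n xs = Some y'"
  shows "y' \<in> words N n \<and> interval P (take (LEAST k. stops_at P N Q n (take k xs)) xs) \<subseteq> interval Q y'"
proof -
  have ex: "\<exists>k\<le>length xs. stops_at P N Q n (take k xs)"
    using assms by (auto simp: phi_int_def split: if_splits)
  let ?k0 = "LEAST k. stops_at P N Q n (take k xs)"
  have "stops_at P N Q n (take ?k0 xs)" using ex by (metis LeastI)
  then have e: "\<exists>y. y \<in> words N n \<and> interval P (take ?k0 xs) \<subseteq> interval Q y"
    by (auto simp: stops_at_def)
  have "y' = (SOME y. y \<in> words N n \<and> interval P (take ?k0 xs) \<subseteq> interval Q y)"
    using assms ex by (simp add: phi_int_def Let_def)
  then show ?thesis using someI_ex[OF e] by simp
qed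

lemma phi_ex:
  assumes "stops_at P N Q n xs"
  shows "\<exists>y'. phi_int P N Q n xs = Some y'"
proof -
  have "\<exists>k\<le>length xs. stops_at P N Q n (take k xs)"
    using assms by (intro exI[of _ "length xs"]) simp
  then show ?thesis by (simp add: phi_int_def)
qed

theorem corollary1:
  fixes M N :: nat and P Q :: "nat \<Rightarrow> nat list \<Rightarrow> real"
  assumes "is_process M P"
    and "\<And>lam::real. lam > 0 \<Longrightarrow> (\<lambda>m. prob_Sc M P m lam) \<longlonglongrightarrow> 0"
  shows "\<forall>n. is_process N Q \<longrightarrow>
           (\<forall>y\<in>words N n. (\<lambda>m. prob_output M P N Q n m y) \<longlonglongrightarrow> Q n y)"
proof (intro allI impI ballI)
  fix n y assume Qp: "is_process N Q" and y: "y \<in> words N n"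
  note Pp = assms(1)
  define q where "q = Q n y"
  define J where "J = interval Q y"
  have ly: "length y = n" using y by (simp add: words_def)
  have Jeq: "J = {lo Q y..<hi Q y}" by (simp add: J_def interval_eq)
  have qlen: "hi Q y - lo Q y = q" using len[OF Qp, of y] ly by (simp add: q_def)
  have Jb: "0 \<le> lo Q y" "lo Q y \<le> hi Q y" "hi Q y \<le> 1" using bounds[OF Qp] by auto
  have lenP: "hi P xs - lo P xs = P m xs" if "xs \<in> words M m" for xs m
    using len[OF Pp, of xs] that by (simp add: words_def)
  have ltP: "lo P xs \<le> hi P xs" for xs using bounds[OF Pp] by auto
  have dP: "interval P a \<inter> interval P b = {}" if "a \<in> words M m" "b \<in> words M m" "a \<noteq> b" for a b m
    using disj[OF Pp] that by (auto simp: words_def)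
  have nnP: "0 \<le> P m xs" for m xs using nn[OF Pp] .
  have fin: "finite (words M m)" for m by (rule words_finite)
  have Jfm: "J \<in> fmeasurable lborel" unfolding Jeq by (rule Ico_fm)
  have mJ: "measure lborel J = q" unfolding Jeq using Jb qlen by simp

  define A where "A m = {xs\<in>words M m. interval P xs \<subseteq> J}" for m

  have phiJ: "interval P xs \<subseteq> J" if "phi_int P N Q n xs = Some y" for xs
    using phi_some[OF that] nest_take[OF Pp, of xs] unfolding J_def by blast
  have phiA: "phi_int P N Q n xs = Some y" if "xs \<in> A m" "0 < P m xs" for xs m
  proof -
    have xs: "xs \<in> words M m" "interval P xs \<subseteq> J" using that by (auto simp: A_def)
    have "stops_at P N Q n xs" using xs y by (auto simp: stops_at_def J_def)
    then obtain y' where py: "phi_int P N Q n xs = Some y'" using phi_ex by blast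
    from phi_some[OF py] nest_take[OF Pp, of xs]
    have y': "y' \<in> words N n" "interval P xs \<subseteq> interval Q y'" by blast+
    have "lo P xs < hi P xs" using lenP[OF xs(1)] that(2) by simp
    then have "lo P xs \<in> interval P xs" by (simp add: interval_eq)
    then have "interval Q y \<inter> interval Q y' \<noteq> {}" using xs(2) y'(2) unfolding J_def by blast
    then have "y = y'" using disj[OF Qp, of y y'] y y' by (auto simp: words_def)
    then show ?thesis using py by simp
  qed

  have po_eq: "prob_output M P N Q n m y = (\<Sum>xs\<in>words M m. if phi_int P N Q n xs = Some y then P m xs else 0)" for m
    by (simp add: prob_output_def)
  have sA: "sum (P m) (A m) = (\<Sum>xs\<in>words M m. if interval P xs \<subseteq> J then P m xs else 0)" for m
    unfolding A_def by (rule sum.inter_filter[OF fin])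

  have upper: "prob_output M P N Q n m y \<le> sum (P m) (A m)" for m
    unfolding po_eq sA by (rule sum_mono) (auto simp: nnP dest: phiJ)
  have lower: "sum (P m) (A m) \<le> prob_output M P N Q n m y" for m
    unfolding po_eq sA
  proof (rule sum_mono)
    fix xs assume xs: "xs \<in> words M m"
    show "(if interval P xs \<subseteq> J then P m xs else 0) \<le> (if phi_int P N Q n xs = Some y then P m xs else 0)"
    proof (cases "interval P xs \<subseteq> J \<and> 0 < P m xs")
      case True
      then have "xs \<in> A m" using xs by (simp add: A_def)
      then show ?thesis using phiA True by auto
    next
      case False
      then show ?thesis using nnP[of m xs] by (auto simp: order.order_iff_strict)
    qed
  qed

  have sAle: "sum (P m) (A m) \<le> q" for m
  proof -
    have "sum (P m) (A m) = (\<Sum>xs\<in>A m. hi P xs - lo P xs)"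
      by (intro sum.cong) (auto simp: A_def lenP)
    also have "\<dots> \<le> measure lborel J"
    proof (rule sum_disj_le)
      show "finite (A m)" using fin by (simp add: A_def)
      fix i j assume "i \<in> A m" "j \<in> A m" "i \<noteq> j"
      then show "{lo P i..<hi P i} \<inter> {lo P j..<hi P j} = {}" using dP[of i m j] by (simp add: A_def interval_eq)
    qed (auto simp: A_def ltP Jfm interval_eq[symmetric])
    finally show ?thesis using mJ by simp
  qed

  have sAge: "q - prob_Sc M P m lam - 2 * 2 powr (-lam) \<le> sum (P m) (A m)" for m lam
  proof -
    define W where "W = words M m"
    define B where "B = {xs\<in>W. \<not> interval P xs \<subseteq> J \<and> interval P xs \<inter> J = {}}"
    define C where "C = {xs\<in>W. \<not> interval P xs \<subseteq> J \<and> interval P xs \<inter> J \<noteq> {}}"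
    define S where "S = {xs\<in>W. 0 < P m xs \<and> log 2 (1 / P m xs) < lam}"
    define d where "d = 2 powr (-lam)"
    have d0: "0 \<le> d" by (simp add: d_def)
    have finW: "finite W" using fin by (simp add: W_def)
    have fB: "finite B" "finite C" "finite S" "finite (A m)" using finW by (auto simp: B_def C_def S_def A_def W_def)
    have "W = A m \<union> (B \<union> C)" by (auto simp: A_def B_def C_def W_def)
    moreover have "sum (P m) (B \<union> C) = sum (P m) B + sum (P m) C"
      by (rule sum.union_disjoint) (use fB in \<open>auto simp: B_def C_def\<close>)
    moreover have "sum (P m) (A m \<union> (B \<union> C)) = sum (P m) (A m) + sum (P m) (B \<union> C)"
      by (rule sum.union_disjoint) (use fB in \<open>auto simp: A_def B_def C_def\<close>)
    ultimately have "sum (P m) W = sum (P m) (A m) + (sum (P m) B + sum (P m) C)" by simp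
    moreover have "sum (P m) W = 1" using s1[OF Pp] by (simp add: W_def)
    moreover have "sum (P m) B \<le> 1 - q"
    proof -
      have "sum (P m) B = (\<Sum>xs\<in>B. hi P xs - lo P xs)"
        by (intro sum.cong) (auto simp: B_def W_def lenP)
      also have "\<dots> \<le> measure lborel ({0..<1} - J)"
      proof (rule sum_disj_le)
        show "{0..<1} - J \<in> fmeasurable lborel" using Jfm Ico_fm by auto
        fix i assume "i \<in> B"
        then have "interval P i \<inter> J = {}" by (simp add: B_def)
        moreover have "interval P i \<subseteq> {0..<1}" using bounds[OF Pp, of i] by (auto simp: interval_eq)
        ultimately show "{lo P i..<hi P i} \<subseteq> {0..<1} - J" by (auto simp: interval_eq)
      next
        fix i j assume "i \<in> B" "j \<in> B" "i \<noteq> j"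
        then show "{lo P i..<hi P i} \<inter> {lo P j..<hi P j} = {}" using dP[of i m j] by (simp add: B_def W_def interval_eq)
      qed (use fB in \<open>auto simp: B_def W_def ltP\<close>)
      also have "\<dots> = measure lborel {0..<1::real} - measure lborel J"
        by (rule measurable_measure_Diff) (use Ico_fm Jfm Jb in \<open>auto simp: Jeq\<close>)
      also have "\<dots> = 1 - q" using mJ by simp
      finally show ?thesis .
    qed
    moreover have "sum (P m) C \<le> prob_Sc M P m lam + 2 * d"
    proof -
      have ps: "prob_Sc M P m lam = sum (P m) S" by (simp add: prob_Sc_def S_def W_def)
      have "sum (P m) C = sum (P m) (C \<inter> S) + sum (P m) (C - S)"
        using fB by (simp add: sum.Int_Diff)
      moreover have "sum (P m) (C \<inter> S) \<le> sum (P m) S"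
        using fB by (intro sum_mono2) (auto simp: nnP)
      moreover have "sum (P m) (C - S) \<le> 2 * d"
      proof -
        define Cc where "Cc = {xs\<in>C - S. lo Q y \<in> interval P xs}"
        define Cd where "Cd = {xs\<in>C - S. hi Q y \<in> interval P xs}"
        have fc: "finite Cc" "finite Cd" using fB by (auto simp: Cc_def Cd_def)
        have CU: "C - S = Cc \<union> Cd"
        proof
          show "C - S \<subseteq> Cc \<union> Cd"
          proof
            fix xs assume "xs \<in> C - S"
            then have "\<not> interval P xs \<subseteq> J" "interval P xs \<inter> J \<noteq> {}" "xs \<in> C - S"
              by (auto simp: C_def)
            then have "\<not> {lo P xs..<hi P xs} \<subseteq> {lo Q y..<hi Q y}"
                "{lo P xs..<hi P xs} \<inter> {lo Q y..<hi Q y} \<noteq> {}" "xs \<in> C - S"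
              by (simp_all add: interval_eq Jeq)
            then show "xs \<in> Cc \<union> Cd" using geo by (auto simp: Cc_def Cd_def interval_eq)
          qed
        qed (auto simp: Cc_def Cd_def)
        have elt: "P m xs \<le> d" if "xs \<in> C - S" for xs
        proof (cases "0 < P m xs")
          case True
          then show ?thesis using that log_bound[OF True, of lam]
            by (auto simp: S_def C_def d_def)
        next
          case False then show ?thesis using d0 nnP[of m xs] by linarith
        qed
        have sc: "sum (P m) Cc \<le> d"
        proof (rule subsing_sum[OF _ _ d0])
          fix a b assume ab: "a \<in> Cc" "b \<in> Cc"
          show "a = b"
          proof (rule ccontr)
            assume "a \<noteq> b"
            moreover have "a \<in> words M m" "b \<in> words M m" using ab by (simp_all add: Cc_def C_def W_def)
            ultimately have "interval P a \<inter> interval P b = {}" by (rule dP[rotated 2]) 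
            then show False using ab unfolding Cc_def by blast
          qed
        qed (use elt in \<open>auto simp: Cc_def\<close>)
        have sd: "sum (P m) Cd \<le> d"
        proof (rule subsing_sum[OF _ _ d0])
          fix a b assume ab: "a \<in> Cd" "b \<in> Cd"
          show "a = b"
          proof (rule ccontr)
            assume "a \<noteq> b"
            moreover have "a \<in> words M m" "b \<in> words M m" using ab by (simp_all add: Cd_def C_def W_def)
            ultimately have "interval P a \<inter> interval P b = {}" by (rule dP[rotated 2]) 
            then show False using ab unfolding Cd_def by blast
          qed
        qed (use elt in \<open>auto simp: Cd_def\<close>)
        have "sum (P m) (Cc \<inter> Cd) \<ge> 0" by (rule sum_nonneg) (simp add: nnP)
        then have "sum (P m) (Cc \<union> Cd) \<le> sum (P m) Cc + sum (P m) Cd"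
          using sum_Un[OF fc, of "P m"] by linarith
        then show ?thesis using CU sc sd by simp
      qed
      ultimately show ?thesis using ps by linarith
    qed
    ultimately show ?thesis unfolding d_def by linarith
  qed

  show "(\<lambda>m. prob_output M P N Q n m y) \<longlonglongrightarrow> Q n y"
  proof (rule LIMSEQ_I)
    fix r :: real assume r: "0 < r"
    obtain k where k: "(1/2::real)^k < r/4" using real_arch_pow_inv[of "r/4" "1/2::real"] r by auto
    define lam where "lam = real (Suc k)"
    have lam0: "lam > 0" by (simp add: lam_def)
    have dl: "2 powr (-lam) < r/4" using pow_bound[of k] k by (simp add: lam_def)
    obtain no where no: "\<forall>m\<ge>no. norm (prob_Sc M P m lam - 0) < r/2"
      using LIMSEQ_D[OF assms(2)[OF lam0], of "r/2"] r by auto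
    have "norm (prob_output M P N Q n m y - Q n y) < r" if "m \<ge> no" for m
    proof -
      have "\<bar>prob_Sc M P m lam\<bar> < r/2" using no that by simp
      then have h1: "prob_Sc M P m lam < r/2" by (simp add: abs_less_iff)
      have h2: "q - prob_Sc M P m lam - 2 * 2 powr (-lam) \<le> prob_output M P N Q n m y"
        using sAge[of m lam] lower[of m] by linarith
      have h3: "prob_output M P N Q n m y \<le> q" using upper[of m] sAle[of m] by linarith
      show ?thesis unfolding real_norm_def abs_less_iff q_def[symmetric] using h1 h2 h3 dl r by linarith
    qed
    then show "\<exists>no. \<forall>m\<ge>no. norm (prob_output M P N Q n m y - Q n y) < r" by blast
  qed
qed

end
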